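(* Let $(\star)$ be a linear system over $\mathbb{F}_q$ ($q$ a prime power) with coefficient matrix $A\in\mathbb{F}_q^{m\times k}$, let $t$ be a positive integer, let $\{(x^{(i)}_1,\dots,x^{(i)}_k)\}_{i=1}^L$ be a list of pairwise disjoint solutions of $(\star)$ in $(\mathbb{F}_q^n)^k$, and let $j_1\ne j_2$ be indices in the same column equivalence class. If $L\ge4t(\Gamma_q)^n$, then there exist $i\in[L]$ and $t$ distinct pairs $(i'_s,i''_s)\in([L]\setminus\{i\})^2$, $s\in[t]$, such that for every $s\in[t]$ the tuple $(y^{(s)}_1,\dots,y^{(s)}_k)$ given by $y^{(s)}_j=x^{(i)}_j$ for $j\ne j_1,j_2$, $y^{(s)}_{j_1}=x^{(i'_s)}_{j_1}$, $y^{(s)}_{j_2}=x^{(i''_s)}_{j_2}$ is a solution of $(\star)$.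
   Context: Solutions are tuples in $(\mathbb{F}_q^n)^k$ with $\sum_ja_{ij}x_j=0$ for all $i$. Two solutions $(x_j)$, $(y_j)$ are disjoint if $\{x_1,\dots,x_k\}\cap\{y_1,\dots,y_k\}=\varnothing$. Indices $j,j'$ are in the same column equivalence class if columns $j,j'$ of $A$ are nonzero scalar multiples of one another. $\Gamma_q:=q\,J(q)$ where $J(t)=\frac1t\min_{0<x<1}\frac{1+x+\cdots+x^{t-1}}{x^{(t-1)/3}}$. *)

theory Defs
  imports "HOL-Analysis.Analysis"
begin

text \<open>Coefficient matrix A in F_q^{m x k} given as a function A i j, i < m, j < k.
  A k-tuple of points of F_q^n is a function x :: nat => 'a^'n (entries j < k matter).\<close>

definition is_solution :: "(nat \<Rightarrow> nat \<Rightarrow> 'a::field) \<Rightarrow> nat \<Rightarrow> nat \<Rightarrow> (nat \<Rightarrow> 'a^'n) \<Rightarrow> bool" where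
  "is_solution A m k x \<longleftrightarrow> (\<forall>i<m. (\<Sum>j<k. A i j *s x j) = 0)"

definition disjoint_sols :: "nat \<Rightarrow> (nat \<Rightarrow> 'b) \<Rightarrow> (nat \<Rightarrow> 'b) \<Rightarrow> bool" where
  "disjoint_sols k x y \<longleftrightarrow> (x ` {..<k}) \<inter> (y ` {..<k}) = {}"

definition same_col_class :: "(nat \<Rightarrow> nat \<Rightarrow> 'a::field) \<Rightarrow> nat \<Rightarrow> nat \<Rightarrow> nat \<Rightarrow> bool" where
  "same_col_class A m j j' \<longleftrightarrow> (\<exists>c. c \<noteq> 0 \<and> (\<forall>i<m. A i j' = c * A i j))"

definition Jfun :: "nat \<Rightarrow> real" where
  "Jfun t = (1 / real t) *
     (INF x\<in>{0<..<1::real}. (\<Sum>i<t. x ^ i) / x powr ((real t - 1) / 3))"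

definition Gamma_q :: "nat \<Rightarrow> real" where
  "Gamma_q q = real q * Jfun q"

end

theory Submission
  imports Defs
begin


lemma LA:
  fixes f :: "'e \<Rightarrow> 'b \<Rightarrow> 'f::field"
  assumes fS: "finite S" and fE: "finite E"
  shows "\<exists>P\<subseteq>S. card S \<le> card P + card E \<and>
     (\<forall>p\<in>P. \<exists>w. (\<forall>k\<in>E. (\<Sum>x\<in>S. w x * f k x) = 0) \<and> w p = 1 \<and> (\<forall>p'\<in>P. p' \<noteq> p \<longrightarrow> w p' = 0))"
  using fE
proof (induction E rule: finite_induct)
  case empty
  show ?case
    by (rule exI[of _ S]) (auto intro!: exI[of _ "\<lambda>x. if x = _ then 1 else 0"])
next
  case (insert e E)
  then obtain P where PS: "P \<subseteq> S" and cardP: "card S \<le> card P + card E" and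
    H: "\<forall>p\<in>P. \<exists>w. (\<forall>k\<in>E. (\<Sum>x\<in>S. w x * f k x) = 0) \<and> w p = 1 \<and> (\<forall>p'\<in>P. p' \<noteq> p \<longrightarrow> w p' = 0)"
    by blast
  from H obtain W where W: "\<And>p. p\<in>P \<Longrightarrow> (\<forall>k\<in>E. (\<Sum>x\<in>S. W p x * f k x) = 0) \<and> W p p = 1 \<and> (\<forall>p'\<in>P. p' \<noteq> p \<longrightarrow> W p p' = 0)"
    by metis
  define c where "c p = (\<Sum>x\<in>S. W p x * f e x)" for p
  have fP: "finite P" using PS fS finite_subset by blast
  show ?case
  proof (cases "\<forall>p\<in>P. c p = 0")
    case True
    show ?thesis
      apply (rule exI[of _ P])
      using PS cardP insert(1,2) W True unfolding c_def
      by (auto intro: le_SucI)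
  next
    case False
    then obtain p0 where p0: "p0 \<in> P" "c p0 \<noteq> 0" by blast
    define P' where "P' = P - {p0}"
    have cP': "card P' + 1 = card P" unfolding P'_def using p0 fP
      by (simp add: card_Diff_singleton_if) (metis One_nat_def Suc_pred card_gt_0_iff empty_iff)
    show ?thesis
    proof (rule exI[of _ P'], intro conjI ballI)
      show "P' \<subseteq> S" using PS P'_def by auto
      show "card S \<le> card P' + card (insert e E)" using cardP cP' insert(1,2) by simp
    next
      fix p assume pP': "p \<in> P'"
      hence pP: "p \<in> P" and pne: "p \<noteq> p0" by (auto simp: P'_def)
      define w where "w x = W p x - (c p / c p0) * W p0 x" for x
      have "\<forall>k\<in>insert e E. (\<Sum>x\<in>S. w x * f k x) = 0"
      proof
        fix k assume k: "k \<in> insert e E"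
        have "(\<Sum>x\<in>S. w x * f k x) = (\<Sum>x\<in>S. W p x * f k x) - (c p / c p0) * (\<Sum>x\<in>S. W p0 x * f k x)"
          unfolding w_def by (simp add: algebra_simps sum_subtractf sum_distrib_left)
        also have "\<dots> = 0"
          using k W[OF pP] W[OF p0(1)] p0(2) unfolding c_def by auto
        finally show "(\<Sum>x\<in>S. w x * f k x) = 0" .
      qed
      moreover have "w p = 1" using W[OF pP] W[OF p0(1)] pP pne unfolding w_def by auto
      moreover have "\<forall>p'\<in>P'. p' \<noteq> p \<longrightarrow> w p' = 0"
        using W[OF pP] W[OF p0(1)] unfolding w_def P'_def by auto
      ultimately show "\<exists>w. (\<forall>k\<in>insert e E. (\<Sum>x\<in>S. w x * f k x) = 0) \<and> w p = 1 \<and> (\<forall>p'\<in>P'. p' \<noteq> p \<longrightarrow> w p' = 0)"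
        by blast
    qed
  qed
qed

lemma rank_lemma:
  fixes B :: "'b \<Rightarrow> 'b \<Rightarrow> 'f::field"
  assumes fP: "finite P" and fK: "finite K"
    and BK: "\<forall>x\<in>P. \<forall>y\<in>P. B x y = (\<Sum>k\<in>K. \<phi> k x * \<psi> k y)"
    and diag: "\<forall>x\<in>P. B x x \<noteq> 0"
    and off: "\<forall>x\<in>P. \<forall>y\<in>P. x \<noteq> y \<longrightarrow> B x y = 0"
  shows "card P \<le> card K"
proof (rule ccontr)
  assume "\<not> card P \<le> card K"
  obtain P' where P': "P' \<subseteq> P" "card P \<le> card P' + card K"
    "\<forall>p\<in>P'. \<exists>w. (\<forall>k\<in>K. (\<Sum>x\<in>P. w x * \<phi> k x) = 0) \<and> w p = 1 \<and> (\<forall>p'\<in>P'. p' \<noteq> p \<longrightarrow> w p' = 0)"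
    using LA[OF fP fK, of \<phi>] by blast
  with \<open>\<not> card P \<le> card K\<close> have "P' \<noteq> {}" by auto
  then obtain p where p: "p \<in> P'" by blast
  with P' obtain w where w: "\<forall>k\<in>K. (\<Sum>x\<in>P. w x * \<phi> k x) = 0" "w p = 1" by blast
  have pP: "p \<in> P" using p P' by auto
  have "(\<Sum>x\<in>P. w x * B x p) = (\<Sum>x\<in>P. \<Sum>k\<in>K. w x * \<phi> k x * \<psi> k p)"
    using BK pP by (auto intro!: sum.cong simp: sum_distrib_left mult.assoc)
  also have "\<dots> = (\<Sum>k\<in>K. (\<Sum>x\<in>P. w x * \<phi> k x) * \<psi> k p)"
    by (subst sum.swap) (simp add: sum_distrib_right)
  also have "\<dots> = 0" using w by simp
  finally have z: "(\<Sum>x\<in>P. w x * B x p) = 0" .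
  have "(\<Sum>x\<in>P. w x * B x p) = w p * B p p + (\<Sum>x\<in>P-{p}. w x * B x p)"
    using fP pP by (simp add: sum.remove)
  also have "(\<Sum>x\<in>P-{p}. w x * B x p) = 0"
    using off pP by (intro sum.neutral) auto
  finally show False using z w diag pP by simp
qed

lemma card_filter_sum: "finite A \<Longrightarrow> card {x\<in>A. P x} = (\<Sum>x\<in>A. if P x then 1 else 0)"
  using sum.inter_filter[of A "\<lambda>_. (1::nat)" P] by simp

lemma turan:
  fixes N :: "'b \<Rightarrow> 'b \<Rightarrow> bool"
  assumes "finite P0" and "\<forall>x\<in>P0. card {y\<in>P0. y \<noteq> x \<and> N x y} \<le> d"
  shows "\<exists>P\<subseteq>P0. card P0 \<le> (2*d+1) * card P \<and> (\<forall>x\<in>P. \<forall>y\<in>P. x \<noteq> y \<longrightarrow> \<not> N x y)"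
  using assms
proof (induction "card P0" arbitrary: P0 rule: less_induct)
  case less
  show ?case
  proof (cases "P0 = {}")
    case True then show ?thesis by auto
  next
    case False
    define out where "out x = card {y\<in>P0. y \<noteq> x \<and> N x y}" for x
    define inn where "inn x = card {y\<in>P0. y \<noteq> x \<and> N y x}" for x
    have sout: "(\<Sum>x\<in>P0. out x) = (\<Sum>x\<in>P0. \<Sum>y\<in>P0. if y \<noteq> x \<and> N x y then 1 else 0)"
      unfolding out_def by (simp add: card_filter_sum less.prems(1))
    have sinn: "(\<Sum>x\<in>P0. inn x) = (\<Sum>x\<in>P0. \<Sum>y\<in>P0. if y \<noteq> x \<and> N y x then 1 else 0)"
      unfolding inn_def by (simp add: card_filter_sum less.prems(1))
    have "(\<Sum>x\<in>P0. inn x) = (\<Sum>x\<in>P0. out x)"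
      unfolding sinn sout by (subst sum.swap) (intro sum.cong refl; auto)
    moreover have "(\<Sum>x\<in>P0. out x) \<le> (\<Sum>x\<in>P0. d)"
      using less.prems(2) unfolding out_def by (intro sum_mono) auto
    ultimately have tot: "(\<Sum>x\<in>P0. out x + inn x) \<le> (\<Sum>x\<in>P0. 2 * d)"
      by (simp add: sum.distrib)
    have "\<exists>x0\<in>P0. out x0 + inn x0 \<le> 2 * d"
    proof (rule ccontr)
      assume "\<not> ?thesis"
      hence "(\<Sum>x\<in>P0. 2 * d) < (\<Sum>x\<in>P0. out x + inn x)"
        using False less.prems(1) by (intro sum_strict_mono) auto
      with tot show False by simp
    qed
    then obtain x0 where x0: "x0 \<in> P0" "out x0 + inn x0 \<le> 2 * d" by blast
    define Nb where "Nb = {y\<in>P0. y \<noteq> x0 \<and> N x0 y} \<union> {y\<in>P0. y \<noteq> x0 \<and> N y x0}"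
    have cNb: "card Nb \<le> 2 * d"
      using card_Un_le[of "{y\<in>P0. y \<noteq> x0 \<and> N x0 y}" "{y\<in>P0. y \<noteq> x0 \<and> N y x0}"] x0(2)
      unfolding Nb_def out_def inn_def by linarith
    define P1 where "P1 = P0 - insert x0 Nb"
    have fP1: "finite P1" using less.prems(1) P1_def by auto
    have fNb: "finite Nb" using less.prems(1) Nb_def by auto
    have "card P0 \<le> card P1 + card (insert x0 Nb)"
    proof -
      have "P0 \<subseteq> P1 \<union> insert x0 Nb" unfolding P1_def by auto
      hence "card P0 \<le> card (P1 \<union> insert x0 Nb)" using fP1 fNb by (intro card_mono) auto
      also have "\<dots> \<le> card P1 + card (insert x0 Nb)" by (rule card_Un_le)
      finally show ?thesis .
    qed
    also have "card (insert x0 Nb) \<le> 2*d + 1" using cNb fNb by (simp add: card_insert_if)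
    finally have c1: "card P0 \<le> card P1 + (2 * d + 1)" by simp
    have lt: "card P1 < card P0" unfolding P1_def using x0(1) less.prems(1)
      by (intro psubset_card_mono) auto
    have "\<forall>x\<in>P1. card {y\<in>P1. y \<noteq> x \<and> N x y} \<le> d"
    proof
      fix x assume "x \<in> P1"
      hence "card {y\<in>P1. y \<noteq> x \<and> N x y} \<le> card {y\<in>P0. y \<noteq> x \<and> N x y}"
        using less.prems(1) unfolding P1_def by (intro card_mono) auto
      also have "\<dots> \<le> d" using less.prems(2) \<open>x \<in> P1\<close> P1_def by auto
      finally show "card {y\<in>P1. y \<noteq> x \<and> N x y} \<le> d" .
    qed
    from less.hyps[OF lt fP1 this] obtain P where
      P: "P \<subseteq> P1" "card P1 \<le> (2*d+1) * card P" "\<forall>x\<in>P. \<forall>y\<in>P. x \<noteq> y \<longrightarrow> \<not> N x y" by blast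
    have fP: "finite P" using P(1) fP1 finite_subset by blast
    have x0P: "x0 \<notin> P" using P(1) P1_def by auto
    show ?thesis
    proof (rule exI[of _ "insert x0 P"], intro conjI)
      show "insert x0 P \<subseteq> P0" using P(1) x0(1) P1_def by auto
      show "card P0 \<le> (2 * d + 1) * card (insert x0 P)"
        using c1 P(2) fP x0P by simp
      show "\<forall>x\<in>insert x0 P. \<forall>y\<in>insert x0 P. x \<noteq> y \<longrightarrow> \<not> N x y"
      proof (intro ballI impI)
        fix x y assume xy: "x \<in> insert x0 P" "y \<in> insert x0 P" "x \<noteq> y"
        show "\<not> N x y"
        proof (cases "x = x0")
          case True
          then have "y \<in> P" "y \<noteq> x0" using xy by auto
          then have "y \<notin> Nb" "y \<in> P0" using P(1) P1_def by auto
          then show ?thesis using True \<open>y \<noteq> x0\<close> unfolding Nb_def by auto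
        next
          case False
          then have xP: "x \<in> P" using xy by auto
          show ?thesis
          proof (cases "y = x0")
            case True
            have "x \<notin> Nb" "x \<in> P0" using xP P(1) P1_def by auto
            then show ?thesis using True False unfolding Nb_def by auto
          next
            case False
            then show ?thesis using xP xy P(3) by auto
          qed
        qed
      qed
    qed
  qed
qed


lemma tao:
  fixes T :: "'b \<Rightarrow> 'b \<Rightarrow> 'b \<Rightarrow> 'f::field"
    and fa :: "'e \<Rightarrow> 'b \<Rightarrow> 'f" and fb :: "'e \<Rightarrow> 'b \<Rightarrow> 'f" and fc :: "'e \<Rightarrow> 'b \<Rightarrow> 'f"
  assumes fS: "finite S" and fEA: "finite EA" and fE2: "finite EB" and fE3: "finite EC"
    and dec: "\<forall>x\<in>S. \<forall>y\<in>S. \<forall>z\<in>S. T x y z = (\<Sum>\<alpha>\<in>EA. fa \<alpha> x * ga \<alpha> y z)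
               + (\<Sum>\<alpha>\<in>EB. fb \<alpha> y * gb \<alpha> x z) + (\<Sum>\<alpha>\<in>EC. fc \<alpha> z * gc \<alpha> x y)"
    and diag: "\<forall>x\<in>S. T x x x \<noteq> 0"
    and xx: "\<forall>x\<in>S. \<forall>z\<in>S. z \<noteq> x \<longrightarrow> T x x z = 0"
    and few: "\<forall>x\<in>S. card {y\<in>S. y \<noteq> x \<and> (\<exists>z\<in>S. T x y z \<noteq> 0)} \<le> d"
  shows "card S \<le> card EC + (2*d+1) * (card EA + card EB)"
proof -
  obtain P3 where P3: "P3 \<subseteq> S" "card S \<le> card P3 + card EC"
    "\<forall>p\<in>P3. \<exists>w. (\<forall>k\<in>EC. (\<Sum>x\<in>S. w x * fc k x) = 0) \<and> w p = 1 \<and> (\<forall>p'\<in>P3. p' \<noteq> p \<longrightarrow> w p' = 0)"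
    using LA[OF fS fE3, of fc] by blast
  from P3(3) obtain W where W: "\<And>p. p\<in>P3 \<Longrightarrow> (\<forall>k\<in>EC. (\<Sum>x\<in>S. W p x * fc k x) = 0) \<and> W p p = 1 \<and> (\<forall>p'\<in>P3. p' \<noteq> p \<longrightarrow> W p p' = 0)"
    by metis
  have fP3: "finite P3" using P3(1) fS finite_subset by blast
  define v where "v z = (\<Sum>p\<in>P3. W p z)" for z
  have vort: "(\<Sum>z\<in>S. v z * fc k z) = 0" if k: "k \<in> EC" for k
  proof -
    have "(\<Sum>z\<in>S. v z * fc k z) = (\<Sum>p\<in>P3. \<Sum>z\<in>S. W p z * fc k z)"
      unfolding v_def by (subst sum.swap) (simp add: sum_distrib_right)
    also have "\<dots> = 0" using W k by (intro sum.neutral) auto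
    finally show ?thesis .
  qed
  have v1: "v p = 1" if p: "p \<in> P3" for p
  proof -
    have "v p = W p p + (\<Sum>p'\<in>P3-{p}. W p' p)" unfolding v_def using fP3 p by (simp add: sum.remove)
    also have "(\<Sum>p'\<in>P3-{p}. W p' p) = 0"
    proof (intro sum.neutral ballI)
      fix p' assume "p' \<in> P3 - {p}"
      thus "W p' p = 0" using W[of p'] p by auto
    qed
    finally show ?thesis using W p by simp
  qed
  define B where "B x y = (\<Sum>z\<in>S. v z * T x y z)" for x y
  define \<phi> where "\<phi> = case_sum (\<lambda>\<alpha> x. fa \<alpha> x) (\<lambda>\<alpha> x. \<Sum>z\<in>S. v z * gb \<alpha> x z)"
  define \<psi> where "\<psi> = case_sum (\<lambda>\<alpha> y. \<Sum>z\<in>S. v z * ga \<alpha> y z) (\<lambda>\<alpha> y. fb \<alpha> y)"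
  have Bdec: "B x y = (\<Sum>k\<in>EA <+> EB. \<phi> k x * \<psi> k y)" if x: "x \<in> S" and y: "y \<in> S" for x y
  proof -
    have "B x y = (\<Sum>z\<in>S. v z * (\<Sum>\<alpha>\<in>EA. fa \<alpha> x * ga \<alpha> y z))
         + (\<Sum>z\<in>S. v z * (\<Sum>\<alpha>\<in>EB. fb \<alpha> y * gb \<alpha> x z)) + (\<Sum>z\<in>S. v z * (\<Sum>\<alpha>\<in>EC. fc \<alpha> z * gc \<alpha> x y))"
      unfolding B_def using dec x y by (simp add: sum.distrib[symmetric] distrib_left)
    also have "(\<Sum>z\<in>S. v z * (\<Sum>\<alpha>\<in>EA. fa \<alpha> x * ga \<alpha> y z)) = (\<Sum>\<alpha>\<in>EA. fa \<alpha> x * (\<Sum>z\<in>S. v z * ga \<alpha> y z))"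
      by (simp add: sum_distrib_left mult_ac) (subst sum.swap, rule refl)
    also have "(\<Sum>z\<in>S. v z * (\<Sum>\<alpha>\<in>EB. fb \<alpha> y * gb \<alpha> x z)) = (\<Sum>\<alpha>\<in>EB. (\<Sum>z\<in>S. v z * gb \<alpha> x z) * fb \<alpha> y)"
      by (simp add: sum_distrib_left sum_distrib_right mult_ac) (subst sum.swap, rule refl)
    also have "(\<Sum>z\<in>S. v z * (\<Sum>\<alpha>\<in>EC. fc \<alpha> z * gc \<alpha> x y)) = (\<Sum>\<alpha>\<in>EC. gc \<alpha> x y * (\<Sum>z\<in>S. v z * fc \<alpha> z))"
      by (simp add: sum_distrib_left mult_ac) (subst sum.swap, rule refl)
    also have "\<dots> = 0" using vort by simp
    also have "(\<Sum>k\<in>EA <+> EB. \<phi> k x * \<psi> k y) = (\<Sum>\<alpha>\<in>EA. fa \<alpha> x * (\<Sum>z\<in>S. v z * ga \<alpha> y z)) + (\<Sum>\<alpha>\<in>EB. (\<Sum>z\<in>S. v z * gb \<alpha> x z) * fb \<alpha> y)"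
      using fEA fE2 by (simp add: sum.Plus \<phi>_def \<psi>_def comp_def)
    ultimately show ?thesis by simp
  qed
  have Bxx: "B x x = v x * T x x x" if x: "x \<in> S" for x
  proof -
    have "B x x = v x * T x x x + (\<Sum>z\<in>S-{x}. v z * T x x z)" unfolding B_def using fS x by (simp add: sum.remove)
    also have "(\<Sum>z\<in>S-{x}. v z * T x x z) = 0" using xx x by (intro sum.neutral) auto
    finally show ?thesis by simp
  qed
  have outdeg: "\<forall>x\<in>P3. card {y\<in>P3. y \<noteq> x \<and> B x y \<noteq> 0} \<le> d"
  proof
    fix x assume x: "x \<in> P3"
    have "{y\<in>P3. y \<noteq> x \<and> B x y \<noteq> 0} \<subseteq> {y\<in>S. y \<noteq> x \<and> (\<exists>z\<in>S. T x y z \<noteq> 0)}"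
    proof
      fix y assume "y \<in> {y\<in>P3. y \<noteq> x \<and> B x y \<noteq> 0}"
      hence y: "y \<in> P3" "y \<noteq> x" "B x y \<noteq> 0" by auto
      have "\<exists>z\<in>S. T x y z \<noteq> 0"
      proof (rule ccontr)
        assume "\<not> ?thesis"
        hence "B x y = 0" unfolding B_def by (intro sum.neutral) auto
        with y show False by simp
      qed
      with y P3(1) show "y \<in> {y\<in>S. y \<noteq> x \<and> (\<exists>z\<in>S. T x y z \<noteq> 0)}" by auto
    qed
    hence "card {y\<in>P3. y \<noteq> x \<and> B x y \<noteq> 0} \<le> card {y\<in>S. y \<noteq> x \<and> (\<exists>z\<in>S. T x y z \<noteq> 0)}"
      using fS by (intro card_mono) auto
    also have "\<dots> \<le> d" using few x P3(1) by auto
    finally show "card {y\<in>P3. y \<noteq> x \<and> B x y \<noteq> 0} \<le> d" .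
  qed
  obtain P where P: "P \<subseteq> P3" "card P3 \<le> (2*d+1) * card P" "\<forall>x\<in>P. \<forall>y\<in>P. x \<noteq> y \<longrightarrow> \<not> B x y \<noteq> 0"
    using turan[OF fP3 outdeg] by blast
  have fP: "finite P" using P(1) fP3 finite_subset by blast
  have "card P \<le> card (EA <+> EB)"
  proof (rule rank_lemma[OF fP _ _ _ _, of "EA <+> EB" B \<phi> \<psi>])
    show "finite (EA <+> EB)" using fEA fE2 by simp
    show "\<forall>x\<in>P. \<forall>y\<in>P. B x y = (\<Sum>k\<in>EA <+> EB. \<phi> k x * \<psi> k y)" using Bdec P(1) P3(1) by blast
    show "\<forall>x\<in>P. B x x \<noteq> 0"
    proof
      fix x assume "x \<in> P"
      hence "x \<in> P3" "x \<in> S" using P(1) P3(1) by auto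
      thus "B x x \<noteq> 0" using Bxx v1 diag by simp
    qed
    show "\<forall>x\<in>P. \<forall>y\<in>P. x \<noteq> y \<longrightarrow> B x y = 0" using P(3) by blast
  qed
  hence "card P \<le> card EA + card EB" using fEA fE2 by (simp add: card_Plus)
  hence "card P3 \<le> (2*d+1) * (card EA + card EB)" using P(2) by (meson le_trans mult_le_mono2)
  thus ?thesis using P3(2) by linarith
qed



lemma fin_field_pow:
  fixes u :: "'a::{field,finite}"
  assumes u: "u \<noteq> 0"
  shows "u ^ (CARD('a) - 1) = 1"
proof -
  define U where "U = (UNIV::'a set) - {0}"
  have fU: "finite U" unfolding U_def by simp
  have cU: "card U = CARD('a) - 1" unfolding U_def by (simp add: card_Diff_singleton)
  have inj: "inj_on (\<lambda>x. u * x) U" using u by (auto simp: inj_on_def)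
  have im: "(\<lambda>x. u * x) ` U = U"
  proof
    show "(\<lambda>x. u * x) ` U \<subseteq> U" using u unfolding U_def by auto
    show "U \<subseteq> (\<lambda>x. u * x) ` U"
    proof
      fix y assume "y \<in> U"
      hence "y = u * (y / u)" "y / u \<in> U" using u unfolding U_def by auto
      thus "y \<in> (\<lambda>x. u * x) ` U" by blast
    qed
  qed
  have "(\<Prod>x\<in>U. u * x) = (\<Prod>x\<in>U. x)"
    using prod.reindex[OF inj, of "\<lambda>x. x"] im by simp
  hence "u ^ card U * (\<Prod>x\<in>U. x) = 1 * (\<Prod>x\<in>U. x)" by (simp add: prod.distrib)
  moreover have "(\<Prod>x\<in>U. x) \<noteq> 0" using fU unfolding U_def by simp
  ultimately show ?thesis using cU by simp
qed

definition ex3 :: "nat \<Rightarrow> (nat \<times> nat) option \<Rightarrow> nat \<times> nat \<times> nat" where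
  "ex3 d \<tau> = (case \<tau> of None \<Rightarrow> (0,0,0) | Some (i,j) \<Rightarrow> (i, j, d - i - j))"

definition cf3 :: "nat \<Rightarrow> (nat \<times> nat) option \<Rightarrow> 'a::comm_ring_1" where
  "cf3 d \<tau> = (case \<tau> of None \<Rightarrow> 1 | Some (i,j) \<Rightarrow> - of_nat ((d choose i) * ((d - i) choose j)))"

definition I3 :: "nat \<Rightarrow> (nat \<times> nat) option set" where
  "I3 d = insert None (Some ` (SIGMA i:{..d}. {..d-i}))"

lemma finite_I3: "finite (I3 d)" unfolding I3_def by auto

lemma ex3_bound: "\<tau> \<in> I3 d \<Longrightarrow> fst (ex3 d \<tau>) + fst (snd (ex3 d \<tau>)) + snd (snd (ex3 d \<tau>)) \<le> d"
  unfolding I3_def ex3_def by auto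

lemma coord_exp:
  fixes s1 s2 s3 :: "'a::comm_ring_1"
  shows "1 - (s1+s2+s3)^d = (\<Sum>\<tau>\<in>I3 d. cf3 d \<tau> * s1^(fst (ex3 d \<tau>)) * s2^(fst (snd (ex3 d \<tau>))) * s3^(snd (snd (ex3 d \<tau>))))"
proof -
  have "(s1+s2+s3)^d = (\<Sum>i\<le>d. of_nat (d choose i) * s1^i * (s2+s3)^(d-i))"
    using binomial_ring[of s1 "s2+s3" d] by (simp add: add.assoc)
  also have "\<dots> = (\<Sum>i\<le>d. \<Sum>j\<le>d-i. of_nat ((d choose i) * ((d-i) choose j)) * s1^i * s2^j * s3^(d-i-j))"
    by (intro sum.cong refl) (simp add: binomial_ring sum_distrib_left mult_ac diff_diff_add)
  also have "\<dots> = (\<Sum>(i,j)\<in>(SIGMA i:{..d}. {..d-i}). of_nat ((d choose i) * ((d-i) choose j)) * s1^i * s2^j * s3^(d-i-j))"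
    by (subst sum.Sigma) auto
  finally have e: "(s1+s2+s3)^d = \<dots>" .
  have "(\<Sum>\<tau>\<in>I3 d. cf3 d \<tau> * s1^(fst (ex3 d \<tau>)) * s2^(fst (snd (ex3 d \<tau>))) * s3^(snd (snd (ex3 d \<tau>))))
      = 1 + (\<Sum>\<tau>\<in>Some ` (SIGMA i:{..d}. {..d-i}). cf3 d \<tau> * s1^(fst (ex3 d \<tau>)) * s2^(fst (snd (ex3 d \<tau>))) * s3^(snd (snd (ex3 d \<tau>))))"
    unfolding I3_def by (subst sum.insert) (auto simp: cf3_def ex3_def)
  also have "(\<Sum>\<tau>\<in>Some ` (SIGMA i:{..d}. {..d-i}). cf3 d \<tau> * s1^(fst (ex3 d \<tau>)) * s2^(fst (snd (ex3 d \<tau>))) * s3^(snd (snd (ex3 d \<tau>))))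
     = (\<Sum>(i,j)\<in>(SIGMA i:{..d}. {..d-i}). - (of_nat ((d choose i) * ((d-i) choose j)) * s1^i * s2^j * s3^(d-i-j)))"
    by (subst sum.reindex) (auto simp: cf3_def ex3_def intro!: sum.cong)
  also have "\<dots> = uminus ((s1+s2+s3)^d)" unfolding e by (simp add: sum_negf case_prod_beta)
  finally show ?thesis by simp
qed


lemma card_field_ge2: "CARD('a::{field,finite}) \<ge> 2"
proof -
  have "card {0::'a, 1} = 2" by simp
  moreover have "card {0::'a, 1} \<le> CARD('a)" by (rule card_mono) auto
  ultimately show ?thesis by simp
qed

lemma delta_prod:
  fixes w :: "'a::{field,finite}^'n"
  shows "(if w = 0 then 1 else 0) = (\<Prod>r\<in>UNIV. 1 - (w$r)^(CARD('a)-1))"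
proof (cases "w = 0")
  case True
  have "CARD('a) - 1 \<noteq> 0" using card_field_ge2[where 'a='a] by simp
  then show ?thesis using True by (simp add: power_0_left)
next
  case False
  then obtain r where r: "w$r \<noteq> 0" by (metis vec_eq_iff zero_index)
  have "(\<Prod>r\<in>UNIV. 1 - (w$r)^(CARD('a)-1)) = 0"
    using r fin_field_pow[OF r] by (intro prod_zero) auto
  then show ?thesis using False by simp
qed

definition monoV :: "('n::finite \<Rightarrow> nat) \<Rightarrow> 'a::comm_ring_1^'n \<Rightarrow> 'a" where
  "monoV \<alpha> x = (\<Prod>r\<in>UNIV. (x$r)^(\<alpha> r))"

definition Eset :: "'a::finite itself \<Rightarrow> 'n::finite itself \<Rightarrow> ('n \<Rightarrow> nat) set" where
  "Eset _ _ = {\<alpha> \<in> PiE UNIV (\<lambda>_. {..<CARD('a)}). 3 * sum \<alpha> UNIV \<le> (CARD('a)-1) * CARD('n)}"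

lemma finite_Eset: "finite (Eset TYPE('a::finite) TYPE('n::finite))"
  unfolding Eset_def by (rule finite_subset[of _ "PiE UNIV (\<lambda>_. {..<CARD('a)})"]) (auto intro: finite_PiE)

lemma decomp:
  "\<exists>H1 H2 H3. \<forall>c a b :: 'a::{field,finite}^'n.
     (if c + a + b = 0 then 1 else 0) =
       (\<Sum>\<alpha>\<in>Eset TYPE('a) TYPE('n). monoV \<alpha> c * H1 \<alpha> a b)
     + (\<Sum>\<alpha>\<in>Eset TYPE('a) TYPE('n). monoV \<alpha> a * H2 \<alpha> c b)
     + (\<Sum>\<alpha>\<in>Eset TYPE('a) TYPE('n). monoV \<alpha> b * H3 \<alpha> c a)"
proof -
  define q where "q = CARD('a)"
  define d where "d = q - 1"
  define n where "n = CARD('n)"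
  define E where "E = Eset TYPE('a) TYPE('n)"
  define p1 where "p1 \<tau> = fst (ex3 d \<tau>)" for \<tau>
  define p2 where "p2 \<tau> = fst (snd (ex3 d \<tau>))" for \<tau>
  define p3 where "p3 \<tau> = snd (snd (ex3 d \<tau>))" for \<tau>
  define G where "G = PiE (UNIV::'n set) (\<lambda>_. I3 d)"
  define \<kappa> :: "('n \<Rightarrow> (nat\<times>nat) option) \<Rightarrow> 'a" where "\<kappa> g = (\<Prod>r\<in>UNIV. cf3 d (g r))" for g
  define F where "F g c a b = \<kappa> g * monoV (p1 \<circ> g) c * monoV (p2 \<circ> g) a * monoV (p3 \<circ> g) b"
    for g and c a b :: "'a^'n"
  define deg where "deg p g = (\<Sum>r\<in>UNIV. p (g r))" for p :: "(nat\<times>nat) option \<Rightarrow> nat" and g :: "'n \<Rightarrow> (nat\<times>nat) option"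
  define C1 where "C1 g = (3 * deg p1 g \<le> d * n)" for g
  define C2 where "C2 g = (3 * deg p2 g \<le> d * n)" for g
  define H1 where "H1 \<alpha> a b = (\<Sum>g\<in>{g\<in>G. C1 g \<and> p1 \<circ> g = \<alpha>}. \<kappa> g * monoV (p2 \<circ> g) a * monoV (p3 \<circ> g) b)" for \<alpha> a b
  define H2 where "H2 \<alpha> c b = (\<Sum>g\<in>{g\<in>G. \<not> C1 g \<and> C2 g \<and> p2 \<circ> g = \<alpha>}. \<kappa> g * monoV (p1 \<circ> g) c * monoV (p3 \<circ> g) b)" for \<alpha> c b
  define H3 where "H3 \<alpha> c a = (\<Sum>g\<in>{g\<in>G. \<not> C1 g \<and> \<not> C2 g \<and> p3 \<circ> g = \<alpha>}. \<kappa> g * monoV (p1 \<circ> g) c * monoV (p2 \<circ> g) a)" for \<alpha> c a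
  have fG: "finite G" unfolding G_def by (intro finite_PiE finite_I3) auto
  have fE: "finite E" unfolding E_def by (rule finite_Eset)
  have bnd: "p1 (g r) + p2 (g r) + p3 (g r) \<le> d" if "g \<in> G" for g r
    using that ex3_bound[of "g r" d] unfolding G_def p1_def p2_def p3_def by auto
  have degsum: "deg p1 g + deg p2 g + deg p3 g \<le> d * n" if "g \<in> G" for g
  proof -
    have "deg p1 g + deg p2 g + deg p3 g = (\<Sum>r\<in>UNIV. p1 (g r) + p2 (g r) + p3 (g r))"
      unfolding deg_def by (simp add: sum.distrib)
    also have "\<dots> \<le> (\<Sum>r\<in>(UNIV::'n set). d)" using bnd[OF that] by (intro sum_mono) auto
    finally show ?thesis unfolding n_def by (simp add: mult.commute)
  qed
  have inE: "p \<circ> g \<in> E" if "g \<in> G" "3 * deg p g \<le> d * n" "\<And>r. p (g r) \<le> d" for p g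
  proof -
    have "d < q" unfolding d_def q_def using card_field_ge2[where 'a='a] by simp
    hence lt: "\<forall>r. p (g r) < CARD('a)" using that(3) unfolding q_def by (meson le_less_trans)
    show ?thesis using that(2) lt unfolding E_def Eset_def deg_def d_def n_def q_def
      by (auto simp: PiE_UNIV_domain)
  qed
  have exp: "(if c + a + b = 0 then 1 else 0) = (\<Sum>g\<in>G. F g c a b)" for c a b :: "'a^'n"
  proof -
    have "(if c + a + b = 0 then 1 else 0) = (\<Prod>r\<in>UNIV. 1 - ((c + a + b)$r)^d)"
      unfolding d_def q_def by (rule delta_prod)
    also have "\<dots> = (\<Prod>r\<in>UNIV. \<Sum>\<tau>\<in>I3 d. cf3 d \<tau> * (c$r)^(p1 \<tau>) * (a$r)^(p2 \<tau>) * (b$r)^(p3 \<tau>))"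
      unfolding p1_def p2_def p3_def by (simp add: coord_exp)
    also have "\<dots> = (\<Sum>g\<in>G. \<Prod>r\<in>UNIV. cf3 d (g r) * (c$r)^(p1 (g r)) * (a$r)^(p2 (g r)) * (b$r)^(p3 (g r)))"
      unfolding G_def by (rule prod_sum_PiE) (auto intro: finite_I3)
    also have "\<dots> = (\<Sum>g\<in>G. F g c a b)"
      unfolding F_def \<kappa>_def monoV_def by (simp add: prod.distrib)
    finally show ?thesis .
  qed
  have split3: "(\<Sum>g\<in>G. F g c a b) = (\<Sum>g\<in>{g\<in>G. C1 g}. F g c a b) + (\<Sum>g\<in>{g\<in>G. \<not> C1 g \<and> C2 g}. F g c a b)
      + (\<Sum>g\<in>{g\<in>G. \<not> C1 g \<and> \<not> C2 g}. F g c a b)" for c a b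
  proof -
    have "(\<Sum>g\<in>G. F g c a b) = (\<Sum>g\<in>G. (if C1 g then F g c a b else 0) + (if \<not> C1 g \<and> C2 g then F g c a b else 0)
          + (if \<not> C1 g \<and> \<not> C2 g then F g c a b else 0))"
      by (intro sum.cong) auto
    also have "\<dots> = (\<Sum>g\<in>{g\<in>G. C1 g}. F g c a b) + (\<Sum>g\<in>{g\<in>G. \<not> C1 g \<and> C2 g}. F g c a b)
      + (\<Sum>g\<in>{g\<in>G. \<not> C1 g \<and> \<not> C2 g}. F g c a b)"
      by (simp add: sum.distrib sum.inter_filter fG)
    finally show ?thesis .
  qed
  have part1: "(\<Sum>g\<in>{g\<in>G. C1 g}. F g c a b) = (\<Sum>\<alpha>\<in>E. monoV \<alpha> c * H1 \<alpha> a b)" for c a b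
  proof -
    have "(\<Sum>g\<in>{g\<in>G. C1 g}. F g c a b) = (\<Sum>\<alpha>\<in>E. \<Sum>g\<in>{g\<in>{g\<in>G. C1 g}. p1 \<circ> g = \<alpha>}. F g c a b)"
    proof (rule sum.group[symmetric])
      show "finite {g\<in>G. C1 g}" using fG by simp
      show "finite E" by (rule fE)
      show "(\<lambda>g. p1 \<circ> g) ` {g\<in>G. C1 g} \<subseteq> E"
      proof
        fix h assume "h \<in> (\<lambda>g. p1 \<circ> g) ` {g\<in>G. C1 g}"
        then obtain g where g: "g \<in> G" "C1 g" "h = p1 \<circ> g" by blast
        have "\<And>r. p1 (g r) \<le> d" using bnd[OF g(1)] by (metis le_add1 le_add2 le_trans)
        then show "h \<in> E" using inE[of g p1] g unfolding C1_def by blast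
      qed
    qed
    also have "\<dots> = (\<Sum>\<alpha>\<in>E. monoV \<alpha> c * H1 \<alpha> a b)"
      unfolding H1_def F_def by (intro sum.cong refl) (auto simp: sum_distrib_left mult_ac intro!: sum.cong)
    finally show ?thesis .
  qed
  have part2: "(\<Sum>g\<in>{g\<in>G. \<not> C1 g \<and> C2 g}. F g c a b) = (\<Sum>\<alpha>\<in>E. monoV \<alpha> a * H2 \<alpha> c b)" for c a b
  proof -
    have "(\<Sum>g\<in>{g\<in>G. \<not> C1 g \<and> C2 g}. F g c a b) = (\<Sum>\<alpha>\<in>E. \<Sum>g\<in>{g\<in>{g\<in>G. \<not> C1 g \<and> C2 g}. p2 \<circ> g = \<alpha>}. F g c a b)"
    proof (rule sum.group[symmetric])
      show "finite {g\<in>G. \<not> C1 g \<and> C2 g}" using fG by simp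
      show "finite E" by (rule fE)
      show "(\<lambda>g. p2 \<circ> g) ` {g\<in>G. \<not> C1 g \<and> C2 g} \<subseteq> E"
      proof
        fix h assume "h \<in> (\<lambda>g. p2 \<circ> g) ` {g\<in>G. \<not> C1 g \<and> C2 g}"
        then obtain g where g: "g \<in> G" "\<not> C1 g \<and> C2 g" "h = p2 \<circ> g" by blast
        have "\<And>r. p2 (g r) \<le> d" using bnd[OF g(1)] by (metis le_add1 le_add2 le_trans)
        then show "h \<in> E" using inE[of g p2] g unfolding C2_def by blast
      qed
    qed
    also have "\<dots> = (\<Sum>\<alpha>\<in>E. monoV \<alpha> a * H2 \<alpha> c b)"
      unfolding H2_def F_def by (intro sum.cong refl) (auto simp: sum_distrib_left mult_ac intro!: sum.cong)
    finally show ?thesis .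
  qed
  have part3: "(\<Sum>g\<in>{g\<in>G. \<not> C1 g \<and> \<not> C2 g}. F g c a b) = (\<Sum>\<alpha>\<in>E. monoV \<alpha> b * H3 \<alpha> c a)" for c a b
  proof -
    have "(\<Sum>g\<in>{g\<in>G. \<not> C1 g \<and> \<not> C2 g}. F g c a b) = (\<Sum>\<alpha>\<in>E. \<Sum>g\<in>{g\<in>{g\<in>G. \<not> C1 g \<and> \<not> C2 g}. p3 \<circ> g = \<alpha>}. F g c a b)"
    proof (rule sum.group[symmetric])
      show "finite {g\<in>G. \<not> C1 g \<and> \<not> C2 g}" using fG by simp
      show "finite E" by (rule fE)
      show "(\<lambda>g. p3 \<circ> g) ` {g\<in>G. \<not> C1 g \<and> \<not> C2 g} \<subseteq> E"
      proof
        fix h assume "h \<in> (\<lambda>g. p3 \<circ> g) ` {g\<in>G. \<not> C1 g \<and> \<not> C2 g}"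
        then obtain g where g: "g \<in> G" "\<not> C1 g" "\<not> C2 g" "h = p3 \<circ> g" by blast
        have "3 * deg p3 g \<le> d * n" using degsum[OF g(1)] g(2,3) unfolding C1_def C2_def by linarith
        moreover have "\<And>r. p3 (g r) \<le> d" using bnd[OF g(1)] by (metis le_add2 le_trans)
        ultimately show "h \<in> E" using inE[of g p3] g by blast
      qed
    qed
    also have "\<dots> = (\<Sum>\<alpha>\<in>E. monoV \<alpha> b * H3 \<alpha> c a)"
      unfolding H3_def F_def by (intro sum.cong refl) (auto simp: sum_distrib_left mult_ac intro!: sum.cong)
    finally show ?thesis .
  qed
  show ?thesis
    apply (rule exI[of _ H1], rule exI[of _ H2], rule exI[of _ H3])
    using exp split3 part1 part2 part3 unfolding E_def by simp
qed



lemma card_Eset_bound: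
  "real (card (Eset TYPE('a::{field,finite}) TYPE('n::finite))) \<le> Gamma_q CARD('a) ^ CARD('n)"
proof -
  define q where "q = CARD('a)"
  define n where "n = CARD('n)"
  define d where "d = q - 1"
  define E where "E = Eset TYPE('a) TYPE('n)"
  define Pi where "Pi = PiE (UNIV::'n set) (\<lambda>_. {..<q})"
  define f where "f x = (\<Sum>i<q. x ^ i) / x powr ((real q - 1) / 3)" for x :: real
  have q2: "q \<ge> 2" unfolding q_def by (rule card_field_ge2)
  have n0: "n > 0" unfolding n_def by simp
  have rd: "real q - 1 = real d" unfolding d_def using q2 by simp
  have Gam: "Gamma_q q = (INF x\<in>{0<..<1::real}. f x)"
    unfolding Gamma_q_def Jfun_def f_def using q2 by simp
  have EPi: "E \<subseteq> Pi" unfolding E_def Eset_def Pi_def q_def by auto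
  have fPi: "finite Pi" unfolding Pi_def by (auto intro: finite_PiE)
  have bound: "real (card E) \<le> f x ^ n" if x: "0 < x" "x < 1" for x
  proof -
    define X where "X = x powr (real d * real n / 3)"
    have Xpos: "X > 0" unfolding X_def using x by simp
    have "real (card E) = (\<Sum>\<alpha>\<in>E. 1)" by simp
    also have "\<dots> \<le> (\<Sum>\<alpha>\<in>E. x ^ (sum \<alpha> UNIV) / X)"
    proof (rule sum_mono)
      fix \<alpha> assume "\<alpha> \<in> E"
      hence "3 * sum \<alpha> UNIV \<le> d * n" unfolding E_def Eset_def d_def q_def n_def by auto
      hence "real (3 * sum \<alpha> UNIV) \<le> real (d * n)" by (rule of_nat_mono)
      hence "3 * real (sum \<alpha> UNIV) \<le> real d * real n" by simp
      hence le: "real (sum \<alpha> UNIV) \<le> real d * real n / 3" by linarith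
      have "X \<le> x powr real (sum \<alpha> UNIV)" unfolding X_def using x le by (intro powr_mono') auto
      also have "\<dots> = x ^ (sum \<alpha> UNIV)" by (rule powr_realpow[OF x(1)])
      finally show "1 \<le> x ^ (sum \<alpha> UNIV) / X" using Xpos by simp
    qed
    also have "\<dots> \<le> (\<Sum>\<alpha>\<in>Pi. x ^ (sum \<alpha> UNIV) / X)"
      using EPi fPi x Xpos by (intro sum_mono2) auto
    finally have A: "real (card E) \<le> (\<Sum>\<alpha>\<in>Pi. x ^ (sum \<alpha> UNIV) / X)" .
    have "(\<Sum>\<alpha>\<in>Pi. x ^ (sum \<alpha> UNIV) / X) = (\<Sum>\<alpha>\<in>Pi. x ^ (sum \<alpha> UNIV)) / X"
      by (simp add: sum_divide_distrib)
    also have "(\<Sum>\<alpha>\<in>Pi. x ^ (sum \<alpha> UNIV)) = (\<Sum>i<q. x ^ i) ^ n"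
    proof -
      have "(\<Sum>\<alpha>\<in>Pi. x ^ (sum \<alpha> UNIV)) = (\<Sum>\<alpha>\<in>Pi. \<Prod>r\<in>UNIV. x ^ \<alpha> r)"
        by (simp add: power_sum)
      also have "\<dots> = (\<Prod>r\<in>(UNIV::'n set). \<Sum>i<q. x ^ i)"
        unfolding Pi_def by (rule prod_sum_PiE[symmetric]) auto
      also have "\<dots> = (\<Sum>i<q. x ^ i) ^ n" unfolding n_def by simp
      finally show ?thesis .
    qed
    also have "(\<Sum>i<q. x ^ i) ^ n / X = (\<Sum>i<q. x ^ i) ^ n / (x powr ((real q - 1) / 3)) ^ n"
    proof -
      have "X = (x powr ((real q - 1) / 3)) ^ n"
        unfolding X_def rd using x by (simp add: powr_power mult_ac)
      thus ?thesis by simp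
    qed
    also have "(\<Sum>i<q. x ^ i) ^ n / (x powr ((real q - 1) / 3)) ^ n = f x ^ n"
      unfolding f_def by (simp add: power_divide)
    finally show ?thesis using A by simp
  qed
  define r where "r = root n (real (card E))"
  have rn: "r ^ n = real (card E)" unfolding r_def using n0 by (simp add: real_root_pow_pos2)
  have r0: "r \<ge> 0" unfolding r_def by (rule real_root_ge_zero) simp
  have fpos: "f x > 0" if "0 < x" "x < 1" for x
  proof -
    have ne: "{..<q} \<noteq> {}" proof -
      have "0 \<in> {..<q}" using q2 by simp
      thus ?thesis by blast
    qed
    have "(\<Sum>i<q. x ^ i) > 0" using that ne by (intro sum_pos) auto
    thus ?thesis unfolding f_def using that by simp
  qed
  have "r \<le> (INF x\<in>{0<..<1::real}. f x)"
  proof (rule cINF_greatest)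
    show "{0<..<1::real} \<noteq> {}" by (simp add: greaterThanLessThan_empty_iff)
    fix x :: real assume "x \<in> {0<..<1}"
    hence x: "0 < x" "x < 1" by auto
    obtain m where m: "n = Suc m" using n0 by (cases n) auto
    have "r ^ Suc m \<le> f x ^ Suc m" using bound[OF x] rn m by simp
    thus "r \<le> f x" by (rule power_le_imp_le_base[OF _ less_imp_le[OF fpos[OF x]]])
  qed
  hence "r ^ n \<le> (INF x\<in>{0<..<1::real}. f x) ^ n" using r0 by (rule power_mono)
  hence "real (card E) \<le> Gamma_q q ^ n" unfolding rn Gam .
  thus ?thesis unfolding E_def q_def n_def .
qed



lemma sum_two:
  assumes "finite K" "j1 \<in> K" "j2 \<in> K" "j1 \<noteq> j2"
  shows "sum F K = F j1 + F j2 + sum F (K - {j1, j2})"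
  using sum.subset_diff[of "{j1,j2}" K F] assms by (simp add: add_ac)

theorem corollary6p2:
  fixes A :: "nat \<Rightarrow> nat \<Rightarrow> 'a::{field,finite}"
    and X :: "nat \<Rightarrow> nat \<Rightarrow> 'a^'n"
    and m k t L j1 j2 :: nat
  assumes "t \<ge> 1"
    and sols: "\<forall>i\<in>{1..L}. is_solution A m k (X i)"
    and disj: "\<forall>i\<in>{1..L}. \<forall>i'\<in>{1..L}. i \<noteq> i' \<longrightarrow> disjoint_sols k (X i) (X i')"
    and "j1 < k" "j2 < k" "j1 \<noteq> j2"
    and "same_col_class A m j1 j2"
    and "real L \<ge> 4 * real t * Gamma_q CARD('a) ^ CARD('n)"
  shows "\<exists>i\<in>{1..L}. \<exists>p :: nat \<Rightarrow> nat \<times> nat.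
           inj_on p {1..t} \<and>
           (\<forall>s\<in>{1..t}. fst (p s) \<in> {1..L} - {i} \<and> snd (p s) \<in> {1..L} - {i} \<and>
              is_solution A m k
                (\<lambda>j. if j = j1 then X (fst (p s)) j1
                      else if j = j2 then X (snd (p s)) j2 else X i j))"
proof -
  note t1 = assms(1) and jk = assms(4,5,6) and scc = assms(7) and Lbig = assms(8)
  define S where "S = {1..L}"
  have fS: "finite S" unfolding S_def by simp
  obtain c where c: "c \<noteq> 0" "\<forall>i<m. A i j2 = c * A i j1"
    using scc unfolding same_col_class_def by blast
  define a where "a i = X i j1" for i
  define b where "b i = c *s X i j2" for i
  define cc where "cc i = - (a i + b i)" for i
  define NT where "NT i = {(y,z)\<in>S\<times>S. (y,z) \<noteq> (i,i) \<and> a y + b z + cc i = 0}" for i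
  have ainj: "a y = a y' \<Longrightarrow> y \<in> S \<Longrightarrow> y' \<in> S \<Longrightarrow> y = y'" for y y'
  proof (rule ccontr)
    assume h: "a y = a y'" "y \<in> S" "y' \<in> S" "y \<noteq> y'"
    hence "disjoint_sols k (X y) (X y')" using disj unfolding S_def by auto
    moreover have "X y j1 \<in> X y ` {..<k}" using jk by auto
    moreover have "X y j1 \<in> X y' ` {..<k}" using h(1) jk unfolding a_def by (metis imageI lessThan_iff)
    ultimately show False unfolding disjoint_sols_def by blast
  qed
  have binj: "b z = b z' \<Longrightarrow> z \<in> S \<Longrightarrow> z' \<in> S \<Longrightarrow> z = z'" for z z'
  proof (rule ccontr)
    assume h: "b z = b z'" "z \<in> S" "z' \<in> S" "z \<noteq> z'"
    have "X z j2 = X z' j2"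
    proof (subst vec_eq_iff, rule allI)
      fix l
      have "c * X z j2 $ l = c * X z' j2 $ l" using h(1) unfolding b_def by (metis vector_smult_component)
      thus "X z j2 $ l = X z' j2 $ l" using c(1) by simp
    qed
    hence "disjoint_sols k (X z) (X z') \<Longrightarrow> False" using jk unfolding disjoint_sols_def by blast
    moreover have "disjoint_sols k (X z) (X z')" using h disj unfolding S_def by auto
    ultimately show False by blast
  qed
  have exi: "\<exists>i\<in>S. t \<le> card (NT i)"
  proof (rule ccontr)
    assume "\<not> ?thesis"
    hence few0: "\<forall>i\<in>S. card (NT i) \<le> t - 1" by auto
    define T where "T x y z = (if cc x + a y + b z = 0 then 1 else (0::'a))" for x y z
    obtain H1 H2 H3 where H: "\<forall>c a b :: 'a^'n.
     (if c + a + b = 0 then 1 else 0) =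
       (\<Sum>\<alpha>\<in>Eset TYPE('a) TYPE('n). monoV \<alpha> c * H1 \<alpha> a b)
     + (\<Sum>\<alpha>\<in>Eset TYPE('a) TYPE('n). monoV \<alpha> a * H2 \<alpha> c b)
     + (\<Sum>\<alpha>\<in>Eset TYPE('a) TYPE('n). monoV \<alpha> b * H3 \<alpha> c a)"
      using decomp by blast
    define M where "M = Eset TYPE('a) TYPE('n)"
    have fM: "finite M" unfolding M_def by (rule finite_Eset)
    have "card S \<le> card M + (2*(t-1)+1) * (card M + card M)"
    proof (rule tao[where T=T and S=S and EA=M and EB=M and EC=M and d="t-1"
          and fa="\<lambda>\<alpha> x. monoV \<alpha> (cc x)" and ga="\<lambda>\<alpha> y z. H1 \<alpha> (a y) (b z)"
          and fb="\<lambda>\<alpha> y. monoV \<alpha> (a y)" and gb="\<lambda>\<alpha> x z. H2 \<alpha> (cc x) (b z)"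
          and fc="\<lambda>\<alpha> z. monoV \<alpha> (b z)" and gc="\<lambda>\<alpha> x y. H3 \<alpha> (cc x) (a y)"])
      show "finite S" "finite M" "finite M" "finite M" using fS fM by auto
      show "\<forall>x\<in>S. \<forall>y\<in>S. \<forall>z\<in>S. T x y z = (\<Sum>\<alpha>\<in>M. monoV \<alpha> (cc x) * H1 \<alpha> (a y) (b z))
               + (\<Sum>\<alpha>\<in>M. monoV \<alpha> (a y) * H2 \<alpha> (cc x) (b z)) + (\<Sum>\<alpha>\<in>M. monoV \<alpha> (b z) * H3 \<alpha> (cc x) (a y))"
        unfolding T_def M_def using H by blast
      show "\<forall>x\<in>S. T x x x \<noteq> 0" unfolding T_def cc_def by simp
      show "\<forall>x\<in>S. \<forall>z\<in>S. z \<noteq> x \<longrightarrow> T x x z = 0"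
      proof (intro ballI impI)
        fix x z assume "x \<in> S" "z \<in> S" "z \<noteq> x"
        hence "b z \<noteq> b x" using binj by blast
        hence "cc x + a x + b z \<noteq> 0" unfolding cc_def
          by (metis add.commute add.left_commute add_minus_cancel neg_eq_iff_add_eq_0 minus_add_distrib)
        thus "T x x z = 0" unfolding T_def by simp
      qed
      show "\<forall>x\<in>S. card {y\<in>S. y \<noteq> x \<and> (\<exists>z\<in>S. T x y z \<noteq> 0)} \<le> t - 1"
      proof
        fix x assume x: "x \<in> S"
        have "{y\<in>S. y \<noteq> x \<and> (\<exists>z\<in>S. T x y z \<noteq> 0)} \<subseteq> fst ` NT x"
        proof
          fix y assume "y \<in> {y\<in>S. y \<noteq> x \<and> (\<exists>z\<in>S. T x y z \<noteq> 0)}"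
          then obtain z where "y \<in> S" "y \<noteq> x" "z \<in> S" "T x y z \<noteq> 0" by blast
          hence "(y,z) \<in> NT x" unfolding NT_def T_def by (auto simp: add_ac split: if_splits)
          thus "y \<in> fst ` NT x" by force
        qed
        moreover have "finite (NT x)" unfolding NT_def
          by (rule finite_subset[of _ "S \<times> S"]) (auto simp: fS)
        ultimately have "card {y\<in>S. y \<noteq> x \<and> (\<exists>z\<in>S. T x y z \<noteq> 0)} \<le> card (NT x)"
          by (meson card_image_le card_mono finite_imageI le_trans)
        thus "card {y\<in>S. y \<noteq> x \<and> (\<exists>z\<in>S. T x y z \<noteq> 0)} \<le> t - 1" using few0 x by (meson le_trans)
      qed
    qed
    hence cS: "card S \<le> (4*t - 1) * card M"
    proof -
      assume h: "card S \<le> card M + (2*(t-1)+1) * (card M + card M)"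
      obtain t' where t': "t = Suc t'" using t1 by (cases t) auto
      have "card M + (2*(t-1)+1) * (card M + card M) = (4*t - 1) * card M"
        unfolding t' by (simp add: algebra_simps)
      thus ?thesis using h by simp
    qed
    have "(\<lambda>_. 0) \<in> M" unfolding M_def Eset_def by (simp add: PiE_UNIV_domain)
    hence M0: "card M > 0" using fM card_gt_0_iff by blast
    have "real (card M) \<le> Gamma_q CARD('a) ^ CARD('n)" unfolding M_def by (rule card_Eset_bound)
    hence "4 * real t * real (card M) \<le> 4 * real t * Gamma_q CARD('a) ^ CARD('n)"
      by (intro mult_left_mono) auto
    hence "4 * real t * real (card M) \<le> real L" using Lbig by linarith
    moreover have "real (card S) \<le> real (4*t-1) * real (card M)" using cS by (metis of_nat_le_iff of_nat_mult)
    moreover have "card S = L" unfolding S_def by simp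
    moreover have "real (4*t-1) = 4 * real t - 1" using t1 by (simp add: of_nat_diff)
    ultimately show False using M0 by (simp add: algebra_simps)
  qed
  then obtain i where i: "i \<in> S" "t \<le> card (NT i)" by blast
  obtain Bs where Bs: "Bs \<subseteq> NT i" "card Bs = t" using obtain_subset_with_card_n[OF i(2)] by blast
  have fNT: "finite (NT i)" unfolding NT_def
    by (rule finite_subset[of _ "S \<times> S"]) (auto simp: fS)
  have fB: "finite Bs" using Bs(1) fNT finite_subset by blast
  obtain p where p: "bij_betw p {1..t} Bs" using finite_same_card_bij[of "{1..t}" Bs] fB Bs(2) by auto
  show ?thesis
  proof (rule bexI[of _ i], rule exI[of _ p], intro conjI ballI)
    show "i \<in> {1..L}" using i S_def by simp
    show "inj_on p {1..t}" using p bij_betw_def by blast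
  next
    fix s assume s: "s \<in> {1..t}"
    obtain y z where yz: "p s = (y,z)" by fastforce
    have "(y,z) \<in> NT i" using p s Bs(1) yz bij_betw_apply by fastforce
    hence yS: "y \<in> S" and zS: "z \<in> S" and ne: "(y,z) \<noteq> (i,i)" and eq: "a y + b z + cc i = 0"
      unfolding NT_def by auto
    have eq2: "a y - a i = - (b z - b i)" using eq unfolding cc_def by (simp add: algebra_simps)
    have "y \<noteq> i"
    proof
      assume "y = i"
      hence "b z = b i" using eq2 by simp
      hence "z = i" using binj zS i(1) by blast
      with \<open>y = i\<close> ne show False by simp
    qed
    moreover have "z \<noteq> i"
    proof
      assume "z = i"
      hence "a y = a i" using eq2 by simp
      hence "y = i" using ainj yS i(1) by blast
      with \<open>z = i\<close> ne show False by simp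
    qed
    ultimately show "fst (p s) \<in> {1..L} - {i}" "snd (p s) \<in> {1..L} - {i}" using yS zS yz S_def by auto
    define Y where "Y j = (if j = j1 then X (fst (p s)) j1 else if j = j2 then X (snd (p s)) j2 else X i j)" for j
    have Xi: "is_solution A m k (X i)" using sols i(1) S_def by auto
    have "is_solution A m k Y"
      unfolding is_solution_def
    proof (intro allI impI)
      fix r assume r: "r < m"
      have X0: "(\<Sum>j<k. A r j *s X i j) = 0" using Xi r unfolding is_solution_def by blast
      show "(\<Sum>j<k. A r j *s Y j) = 0"
      proof (subst vec_eq_iff, rule allI)
        fix l
        have X0l: "(\<Sum>j<k. A r j * X i j $ l) = 0"
          using arg_cong[OF X0, of "\<lambda>v. v $ l"] by (simp add: sum_component)
        have eql: "X y j1 $ l - X i j1 $ l = - (c * (X z j2 $ l - X i j2 $ l))"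
          using arg_cong[OF eq2, of "\<lambda>v. v $ l"] unfolding a_def b_def by (simp add: algebra_simps)
        have K: "finite {..<k}" "j1 \<in> {..<k}" "j2 \<in> {..<k}" "j1 \<noteq> j2" using jk by auto
        have "(\<Sum>j<k. A r j * Y j $ l) = A r j1 * Y j1 $ l + A r j2 * Y j2 $ l + (\<Sum>j\<in>{..<k} - {j1,j2}. A r j * Y j $ l)"
          by (rule sum_two[OF K])
        also have "(\<Sum>j\<in>{..<k} - {j1,j2}. A r j * Y j $ l) = (\<Sum>j\<in>{..<k} - {j1,j2}. A r j * X i j $ l)"
          unfolding Y_def by (intro sum.cong) auto
        also have "\<dots> = - (A r j1 * X i j1 $ l + A r j2 * X i j2 $ l)"
        proof -
          have "A r j1 * X i j1 $ l + A r j2 * X i j2 $ l + (\<Sum>j\<in>{..<k} - {j1,j2}. A r j * X i j $ l) = 0"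
            using X0l sum_two[OF K, of "\<lambda>j. A r j * X i j $ l"] by simp
          thus ?thesis by (metis add.commute eq_neg_iff_add_eq_0)
        qed
        also have "A r j1 * Y j1 $ l + A r j2 * Y j2 $ l + - (A r j1 * X i j1 $ l + A r j2 * X i j2 $ l)
            = A r j1 * (X y j1 $ l - X i j1 $ l) + c * A r j1 * (X z j2 $ l - X i j2 $ l)"
          unfolding Y_def using yz c(2) r jk(3) by (simp add: algebra_simps)
        also have "\<dots> = 0" unfolding eql by (simp add: algebra_simps)
        finally show "(\<Sum>j<k. A r j *s Y j) $ l = 0 $ l" by (simp add: sum_component)
      qed
    qed
    thus "is_solution A m k (\<lambda>j. if j = j1 then X (fst (p s)) j1 else if j = j2 then X (snd (p s)) j2 else X i j)"
      unfolding Y_def .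
  qed
qed


end
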